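(* Let $\lambda_0=0$ and $\lambda_{n+1}=1/m_n$ for $n\ge0$ (so $\lambda_{n+1}=\tfrac12(\lambda_n+\sqrt{\lambda_n^2+4})$). Then: (1) $\sqrt n\le\lambda_n\le\sqrt{2n}$ for $n\ge0$; (2) $(\lambda_n)_n$ is increasing and divergent, $(\lambda_{n+1}/\lambda_n)_{n\ge1}$ is decreasing, and $\lambda_{n+1}/\lambda_n\to1$; (3) $\lambda_{n+1}^2-\lambda_n^2\to2$; (4) $\lambda_n^2/n\to2$; (5) $(\lambda_n^2-2n)/\log n\to-\tfrac12$; (6) $f(s)/\sqrt{2s}\to1$ as $s\to\infty$; (7) $f'(s)\sqrt{2s}\to1$ as $s\to\infty$.
   Context: Let $(m_n)_{n\ge0}$ be the unique sequence of positive reals with $m_0=1$ and $(1+m_1+\cdots+m_n)\,m_n=1$ for $n\ge1$. It is a Hausdorff moment sequence: let $\mu$ be the unique probability measure on $[0,1]$ with $\int_0^1t^n\,d\mu(t)=m_n$. For $s>0$ let $f(s)=\int_0^1\frac{1-t^s}{1-t}\,d\mu(t)$. *)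

theory Defs
  imports "HOL-Probability.Probability"
begin

definition mseq_prop :: "(nat \<Rightarrow> real) \<Rightarrow> bool" where
  "mseq_prop m \<longleftrightarrow> (\<forall>n. m n > 0) \<and> m 0 = 1 \<and>
     (\<forall>n\<ge>1. (1 + (\<Sum>k=1..n. m k)) * m n = 1)"

definition mseq :: "nat \<Rightarrow> real" where
  "mseq = (THE m. mseq_prop m)"

definition lam :: "nat \<Rightarrow> real" where
  "lam n = (if n = 0 then 0 else 1 / mseq (n - 1))"

definition fmu :: "real measure \<Rightarrow> real \<Rightarrow> real" where
  "fmu \<mu> s = (\<integral>t. (1 - t powr s) / (1 - t) \<partial>\<mu>)"

end

theory Submission
  imports Defs "HOL-Real_Asymp.Real_Asymp"
begin

fun L :: "nat \<Rightarrow> real" where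
  "L 0 = 0" | "L (Suc n) = (L n + sqrt ((L n)^2 + 4)) / 2"

lemma L_nonneg: "L n \<ge> 0"
  by (induction n) auto

declare L.simps(2)[simp del]

lemma L_ge1: "L (Suc n) \<ge> 1"
proof -
  have "sqrt ((L n)^2 + 4) \<ge> sqrt 4" by (intro real_sqrt_le_mono) auto
  then have "sqrt ((L n)^2 + 4) \<ge> 2" by simp
  with L_nonneg[of n] show ?thesis by (simp add: L.simps(2))
qed

lemma L_pos: "L (Suc n) > 0" using L_ge1[of n] by linarith

lemma L_quad: "(L (Suc n))^2 = L n * L (Suc n) + 1"
proof -
  define a where "a = L n"
  define r where "r = sqrt (a^2 + 4)"
  have r2: "r^2 = a^2 + 4" unfolding r_def by simp
  have "L (Suc n) = (a + r) / 2" by (simp add: a_def r_def L.simps(2))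
  then have "r = 2 * L (Suc n) - a" by simp
  with r2 have "(2 * L (Suc n) - a)^2 = a^2 + 4" by simp
  then have "4 * ((L (Suc n))^2 - a * L (Suc n) - 1) = 0"
    by (simp add: power2_eq_square algebra_simps)
  then show ?thesis unfolding a_def by simp
qed

lemma L_rec: "L (Suc n) = L n + 1 / L (Suc n)"
  using L_quad[of n] L_pos[of n] by (simp add: field_simps power2_eq_square)

lemma L_sq: "(L (Suc n))^2 = (L n)^2 + 2 - 1 / (L (Suc n))^2"
proof -
  have "L n = L (Suc n) - 1 / L (Suc n)" using L_rec[of n] by simp
  moreover have "(L (Suc n) - 1 / L (Suc n))^2 = (L (Suc n))^2 - 2 + 1 / (L (Suc n))^2"
    using L_pos[of n] by (simp add: power2_diff power_divide)
  ultimately have "(L n)^2 = (L (Suc n))^2 - 2 + 1 / (L (Suc n))^2" by simp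
  then show ?thesis by simp
qed

lemma L_1 [simp]: "L (Suc 0) = 1" by (simp add: L.simps(2))

definition m0 :: "nat \<Rightarrow> real" where "m0 k = 1 / L (Suc k)"

lemma m0_sum: "1 + (\<Sum>k=1..n. m0 k) = L (Suc n)"
proof (induction n)
  case 0 then show ?case by (simp add: L_1)
next
  case (Suc n)
  have "1 + (\<Sum>k=1..Suc n. m0 k) = 1 + (\<Sum>k=1..n. m0 k) + m0 (Suc n)" by simp
  also have "\<dots> = L (Suc (Suc n))" using Suc L_rec[of "Suc n"] by (simp add: m0_def)
  finally show ?case .
qed

lemma m0_prop: "mseq_prop m0"
  unfolding mseq_prop_def
proof (intro conjI allI impI)
  show "m0 n > 0" for n using L_pos[of n] by (simp add: m0_def)
  show "m0 0 = 1" by (simp add: m0_def L_1)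
  show "(1 + (\<Sum>k=1..n. m0 k)) * m0 n = 1" for n
    using m0_sum[of n] L_pos[of n] by (simp add: m0_def)
qed

lemma inv_diff_mono:
  fixes x y :: real
  assumes "0 < x" "x < y" shows "x - 1/x < y - 1/y"
proof -
  have "1/y < 1/x" using assms by (simp add: frac_less2)
  then show ?thesis using assms by linarith
qed

lemma inv_diff_inj:
  fixes x y :: real
  assumes "0 < x" "0 < y" "x - 1/x = y - 1/y" shows "x = y"
  using inv_diff_mono[of x y] inv_diff_mono[of y x] assms
  by (cases x y rule: linorder_cases) auto

lemma mseq_unique:
  assumes "mseq_prop m" shows "m = m0"
proof -
  have pos: "\<And>n. m n > 0" and m0': "m 0 = 1" and eq: "\<And>n. n \<ge> 1 \<Longrightarrow> (1 + (\<Sum>k=1..n. m k)) * m n = 1"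
    using assms unfolding mseq_prop_def by auto
  have S: "1 + (\<Sum>k=1..n. m k) = L (Suc n)" for n
  proof (induction n)
    case 0 then show ?case by (simp add: L_1)
  next
    case (Suc n)
    define x where "x = 1 + (\<Sum>k=1..Suc n. m k)"
    have xm: "x * m (Suc n) = 1" using eq[of "Suc n"] by (simp add: x_def)
    have xpos: "x > 0" using xm pos[of "Suc n"] by (metis zero_less_mult_pos2 zero_less_one)
    have "x = L (Suc n) + m (Suc n)" using Suc by (simp add: x_def)
    then have "x - 1/x = L (Suc n)" using xm xpos by (simp add: field_simps)
    also have "\<dots> = L (Suc (Suc n)) - 1 / L (Suc (Suc n))" using L_rec[of "Suc n"] by simp
    finally have "x = L (Suc (Suc n))" using xpos L_pos inv_diff_inj by blast
    then show ?case by (simp add: x_def)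
  qed
  show ?thesis
  proof
    fix n
    show "m n = m0 n"
    proof (cases "n = 0")
      case True then show ?thesis using m0' by (simp add: m0_def L_1)
    next
      case False
      then have "L (Suc n) * m n = 1" using eq[of n] S[of n] by simp
      then show ?thesis using L_pos[of n] by (simp add: m0_def field_simps)
    qed
  qed
qed

lemma mseq_eq: "mseq = m0"
  unfolding mseq_def using m0_prop mseq_unique by (rule the_equality)

lemma lam_eq: "lam = L"
proof
  fix n show "lam n = L n"
    by (cases n) (simp_all add: lam_def mseq_eq m0_def)
qed


lemma L_sq_bounds: "real n \<le> (L n)^2 \<and> (L n)^2 \<le> 2 * real n"
proof (induction n)
  case 0 then show ?case by simp
next
  case (Suc n)
  have g: "(L (Suc n))^2 \<ge> 1" using L_ge1[of n] by (simp add: one_le_power)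
  then have a: "1 / (L (Suc n))^2 \<le> 1" by (simp add: divide_le_eq_1)
  have b: "1 / (L (Suc n))^2 > 0" using L_pos[of n] by simp
  have c: "real (Suc n) = real n + 1" by simp
  define q where "q = 1 / (L (Suc n))^2"
  have a': "q \<le> 1" and b': "q > 0" and s': "(L (Suc n))^2 = (L n)^2 + 2 - q"
    using a b L_sq[of n] unfolding q_def by auto
  have "real (Suc n) \<le> (L (Suc n))^2" using Suc.IH L_sq[of n] a b c by linarith
  moreover have "(L (Suc n))^2 \<le> 2 * real (Suc n)"
  proof -
    have "(L (Suc n))^2 \<le> (L n)^2 + 2" using s' b' by simp
    also have "\<dots> \<le> 2 * real n + 2" using Suc.IH by simp
    finally show ?thesis by simp
  qed
  ultimately show ?case by simp
qed

lemma L_sqrt_bounds: "sqrt (real n) \<le> L n \<and> L n \<le> sqrt (2 * real n)"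
  using L_sq_bounds[of n] L_nonneg[of n]
  by (metis real_le_rsqrt real_sqrt_le_iff real_sqrt_abs abs_of_nonneg)

lemma L_mono_Suc: "L n \<le> L (Suc n)"
  using L_rec[of n] L_pos[of n] by (metis le_add_same_cancel1 less_eq_real_def zero_less_divide_1_iff)

lemma L_incseq: "incseq L"
  using L_mono_Suc by (rule incseq_SucI)

lemma L_at_top: "filterlim L at_top sequentially"
proof (rule filterlim_at_top_mono)
  show "filterlim (\<lambda>n. sqrt (real n)) at_top sequentially" by real_asymp
  show "\<forall>\<^sub>F n in sequentially. sqrt (real n) \<le> L n" using L_sqrt_bounds by auto
qed

lemma L_pos': "n \<ge> 1 \<Longrightarrow> L n > 0"
  using L_pos by (cases n) auto

lemma L_ratio: "n \<ge> 1 \<Longrightarrow> L (Suc n) / L n = 1 + 1 / (L n * L (Suc n))"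
  using L_rec[of n] L_pos'[of n] L_pos[of n] by (simp add: field_simps)

lemma L_ratio_dec: "n \<ge> 1 \<Longrightarrow> L (n + 2) / L (n + 1) \<le> L (n + 1) / L n"
proof -
  assume n: "n \<ge> 1"
  have "L n * L (Suc n) \<le> L (Suc n) * L (Suc (Suc n))"
    using L_mono_Suc[of n] L_mono_Suc[of "Suc n"] L_nonneg[of n] L_nonneg[of "Suc n"]
    by (simp add: mult.commute mult_mono)
  moreover have "L n * L (Suc n) > 0" using L_pos'[OF n] L_pos[of n] by simp
  ultimately have "1 / (L (Suc n) * L (Suc (Suc n))) \<le> 1 / (L n * L (Suc n))"
    by (simp add: frac_le)
  then show ?thesis using L_ratio[OF n] L_ratio[of "Suc n"] by simp
qed

lemma L_ratio_lim: "(\<lambda>n. L (Suc n) / L n) \<longlonglongrightarrow> 1"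
proof -
  have "(\<lambda>n. 1 + 1 / (L n * L (Suc n))) \<longlonglongrightarrow> 1 + 0"
  proof (intro tendsto_add tendsto_const)
    show "(\<lambda>n. 1 / (L n * L (Suc n))) \<longlonglongrightarrow> 0"
    proof (rule tendsto_sandwich)
      show "\<forall>\<^sub>F n in sequentially. 0 \<le> 1 / (L n * L (Suc n))"
        using L_nonneg by auto
      show "\<forall>\<^sub>F n in sequentially. 1 / (L n * L (Suc n)) \<le> 1 / real n"
      proof (rule eventually_sequentiallyI[of 1])
        fix n :: nat assume n: "n \<ge> 1"
        have "real n \<le> (L n)^2" using L_sq_bounds by auto
        also have "\<dots> \<le> L n * L (Suc n)" using L_mono_Suc[of n] L_nonneg[of n]
          by (simp add: power2_eq_square mult_left_mono)
        finally show "1 / (L n * L (Suc n)) \<le> 1 / real n" using n by (simp add: frac_le)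
      qed
      show "(\<lambda>_. 0) \<longlonglongrightarrow> (0::real)" by simp
      show "(\<lambda>n. 1 / real n) \<longlonglongrightarrow> 0" by real_asymp
    qed
  qed
  then have "(\<lambda>n. 1 + 1 / (L n * L (Suc n))) \<longlonglongrightarrow> 1" by simp
  then show ?thesis
    by (rule Lim_transform_eventually) (use L_ratio in \<open>auto intro!: eventually_sequentiallyI[of 1]\<close>)
qed

lemma L_diff_sq_lim: "(\<lambda>n. (L (Suc n))^2 - (L n)^2) \<longlonglongrightarrow> 2"
proof -
  have "(\<lambda>n. 2 - 1 / (L (Suc n))^2) \<longlonglongrightarrow> 2 - 0"
  proof (intro tendsto_diff tendsto_const)
    show "(\<lambda>n. 1 / (L (Suc n))^2) \<longlonglongrightarrow> 0"
    proof (rule tendsto_sandwich)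
      show "\<forall>\<^sub>F n in sequentially. 0 \<le> 1 / (L (Suc n))^2" by auto
      show "\<forall>\<^sub>F n in sequentially. 1 / (L (Suc n))^2 \<le> 1 / real (Suc n)"
      proof (intro always_eventually allI)
        fix n
        have "real (Suc n) \<le> (L (Suc n))^2" using L_sq_bounds by blast
        then show "1 / (L (Suc n))^2 \<le> 1 / real (Suc n)" by (simp add: frac_le)
      qed
      show "(\<lambda>_. 0) \<longlonglongrightarrow> (0::real)" by simp
      show "(\<lambda>n. 1 / real (Suc n)) \<longlonglongrightarrow> 0" by real_asymp
    qed
  qed
  moreover have "(L (Suc n))^2 - (L n)^2 = 2 - 1 / (L (Suc n))^2" for n
    using L_sq[of n] by simp
  ultimately show ?thesis by simp
qed

definition e :: "nat \<Rightarrow> real" where "e n = (\<Sum>k=1..n. 1 / (L k)^2)"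

lemma L_sq_e: "(L n)^2 = 2 * real n - e n"
proof (induction n)
  case 0 then show ?case by (simp add: e_def)
next
  case (Suc n) then show ?case using L_sq[of n] by (simp add: e_def)
qed

lemma inv_L_sq_le: "k \<ge> 1 \<Longrightarrow> 1 / (L k)^2 \<le> 1 / real k"
  using L_sq_bounds[of k] by (simp add: frac_le)

lemma e_le_harm: "e n \<le> harm n"
proof -
  have "e n \<le> (\<Sum>k=1..n. 1 / real k)" unfolding e_def by (intro sum_mono inv_L_sq_le) auto
  also have "\<dots> = harm n" by (simp add: harm_def divide_inverse)
  finally show ?thesis .
qed

lemma harm_le_sqrt: "n \<ge> 1 \<Longrightarrow> harm n \<le> 3 * sqrt (real n)"
proof -
  assume n: "n \<ge> 1"
  have "harm n - ln (real n) \<le> harm 1 - ln (real 1)"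
    using euler_mascheroni_sequence_decreasing[of 1 n] n by simp
  then have h: "harm n \<le> 1 + ln (real n)" by (simp add: harm_def)
  have "ln (real n) = 2 * ln (sqrt (real n))" using n by (simp add: ln_sqrt)
  also have "\<dots> \<le> 2 * sqrt (real n)" using n ln_le_minus_one[of "sqrt (real n)"] by simp
  finally have "ln (real n) \<le> 2 * sqrt (real n)" .
  moreover have "1 \<le> sqrt (real n)" using n by simp
  ultimately show ?thesis using h by linarith
qed

definition d :: "nat \<Rightarrow> real" where "d k = 1 / (L k)^2 - 1 / (2 * real k)"

lemma d_nonneg: "d k \<ge> 0"
proof (cases "k = 0")
  case True then show ?thesis by (simp add: d_def)
next
  case False
  then have kp: "real k > 0" by simp
  then have Lk: "(L k)^2 > 0" using L_sq_bounds[of k] by linarith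
  have "1 / (2 * real k) \<le> 1 / (L k)^2"
    using L_sq_bounds[of k] Lk by (intro frac_le) auto
  then show ?thesis by (simp add: d_def)
qed

lemma d_le: "d k \<le> 3/2 * real k powr (-3/2)"
proof (cases "k = 0")
  case True then show ?thesis by (simp add: d_def)
next
  case False
  then have k: "k \<ge> 1" by simp
  have Lp: "(L k)^2 \<ge> real k" using L_sq_bounds[of k] by simp
  have kp: "real k > 0" using k by simp
  have Lk: "(L k)^2 > 0" using Lp kp by linarith
  have "d k = (2 * real k - (L k)^2) / (2 * real k * (L k)^2)"
    using Lk kp by (simp add: d_def field_simps)
  also have "\<dots> = e k / (2 * real k * (L k)^2)" using L_sq_e[of k] by simp
  finally have "d k = e k / (2 * real k * (L k)^2)" .
  also have "\<dots> \<le> e k / (2 * real k * real k)"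
  proof (rule divide_left_mono)
    show "0 \<le> e k" unfolding e_def by (intro sum_nonneg) auto
    show "2 * real k * real k \<le> 2 * real k * (L k)^2" using Lp kp by simp
    show "0 < 2 * real k * (L k)\<^sup>2 * (2 * real k * real k)" using Lk kp by (intro mult_pos_pos) auto
  qed
  also have "\<dots> \<le> 3 * sqrt (real k) / (2 * real k * real k)"
    using e_le_harm[of k] harm_le_sqrt[OF k] kp by (simp add: divide_right_mono)
  also have "\<dots> = 3/2 * real k powr (-3/2)"
  proof -
    have "sqrt (real k) = real k powr (1/2)" using kp by (simp add: powr_half_sqrt)
    moreover have "real k powr (-3/2) = real k powr (1/2) / (real k * real k)"
    proof -
      have "real k powr (1/2) = real k powr (-3/2 + 2)" by simp
      also have "\<dots> = real k powr (-3/2) * real k powr 2" by (rule powr_add)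
      also have "\<dots> = real k powr (-3/2) * (real k * real k)"
        using kp by (simp add: power2_eq_square)
      finally show ?thesis using kp by (simp add: field_simps)
    qed
    ultimately show ?thesis by simp
  qed
  finally show ?thesis .
qed

lemma d_summable: "summable d"
proof (rule summable_comparison_test)
  show "\<exists>N. \<forall>n\<ge>N. norm (d n) \<le> 3/2 * real n powr (-3/2)"
    using d_le d_nonneg by auto
  show "summable (\<lambda>n. 3/2 * real n powr (-3/2))"
    by (intro summable_mult) (simp add: summable_real_powr_iff)
qed

definition Dc :: real where "Dc = suminf d"

lemma e_decomp: "e n = harm n / 2 + (\<Sum>k=1..n. d k)"
proof -
  have 1: "(\<Sum>k=1..n. d k) = e n - (\<Sum>k=1..n. 1 / (2 * real k))"
    unfolding d_def e_def by (rule sum_subtractf)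
  have "harm n / 2 = (\<Sum>k=1..n. inverse (real k) / 2)"
    unfolding harm_def by (rule sum_divide_distrib)
  also have "\<dots> = (\<Sum>k=1..n. 1 / (2 * real k))"
    by (intro sum.cong refl) (simp add: inverse_eq_divide)
  finally show ?thesis using 1 by simp
qed

lemma D_bounds: "0 \<le> (\<Sum>k=1..n. d k) \<and> (\<Sum>k=1..n. d k) \<le> Dc"
  unfolding Dc_def using d_summable d_nonneg
  by (auto intro!: sum_nonneg sum_le_suminf)

lemma harm_ln_lim: "(\<lambda>n. harm n / ln (real n)) \<longlonglongrightarrow> (1::real)"
proof -
  have il: "(\<lambda>n. 1 / ln (real n)) \<longlonglongrightarrow> 0" by real_asymp
  have "(\<lambda>n. 1 + (harm n - ln (real n)) * (1 / ln (real n))) \<longlonglongrightarrow> 1 + euler_mascheroni * 0"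
    by (rule tendsto_add[OF tendsto_const tendsto_mult[OF euler_mascheroni_LIMSEQ il]])
  then have "(\<lambda>n. 1 + (harm n - ln (real n)) * (1 / ln (real n))) \<longlonglongrightarrow> 1" by simp
  then show ?thesis
  proof (rule Lim_transform_eventually)
    show "\<forall>\<^sub>F n in sequentially. 1 + (harm n - ln (real n)) * (1 / ln (real n)) = harm n / ln (real n)"
    proof (rule eventually_sequentiallyI[of 2])
      fix n :: nat assume "n \<ge> 2"
      then have "ln (real n) > 0" by simp
      then show "1 + (harm n - ln (real n)) * (1 / ln (real n)) = harm n / ln (real n)"
        by (simp add: field_simps)
    qed
  qed
qed

lemma L_log_lim: "(\<lambda>n. ((L n)^2 - 2 * real n) / ln (real n)) \<longlonglongrightarrow> - 1 / 2"
proof -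
  have D0: "(\<lambda>n. (\<Sum>k=1..n. d k) / ln (real n)) \<longlonglongrightarrow> 0"
  proof (rule tendsto_sandwich)
    show "\<forall>\<^sub>F n in sequentially. 0 \<le> (\<Sum>k=1..n. d k) / ln (real n)"
      using D_bounds by (auto intro!: eventually_sequentiallyI[of 1])
    show "\<forall>\<^sub>F n in sequentially. (\<Sum>k=1..n. d k) / ln (real n) \<le> Dc / ln (real n)"
      using D_bounds by (auto intro!: eventually_sequentiallyI[of 2] divide_right_mono)
    show "(\<lambda>_. 0) \<longlonglongrightarrow> (0::real)" by simp
    have il: "(\<lambda>n. 1 / ln (real n)) \<longlonglongrightarrow> 0" by real_asymp
    show "(\<lambda>n. Dc / ln (real n)) \<longlonglongrightarrow> 0" using tendsto_mult[OF tendsto_const[of Dc] il] by simp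
  qed
  have "(\<lambda>n. - (harm n / ln (real n) / 2 + (\<Sum>k=1..n. d k) / ln (real n))) \<longlonglongrightarrow> - (1 / 2 + 0)"
    using tendsto_minus[OF tendsto_add[OF tendsto_divide[OF harm_ln_lim tendsto_const[of 2]] D0]] by simp
  then have lim1: "(\<lambda>n. - (harm n / ln (real n) / 2 + (\<Sum>k=1..n. d k) / ln (real n))) \<longlonglongrightarrow> - 1 / 2"
    by simp
  have eqn: "- (harm n / ln (real n) / 2 + (\<Sum>k=1..n. d k) / ln (real n))
      = ((L n)^2 - 2 * real n) / ln (real n)" for n
  proof -
    have "(L n)^2 - 2 * real n = - (harm n / 2 + (\<Sum>k=1..n. d k))"
      using L_sq_e[of n] e_decomp[of n] by simp
    moreover have "harm n / ln (real n) / 2 = harm n / 2 / ln (real n)" by simp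
    ultimately show ?thesis by (simp add: diff_divide_distrib divide_divide_eq_left mult.commute)
  qed
  show ?thesis using lim1 unfolding eqn .
qed

lemma L_sq_lim: "(\<lambda>n. (L n)^2 / real n) \<longlonglongrightarrow> 2"
proof -
  have lr: "(\<lambda>n. ln (real n) / real n) \<longlonglongrightarrow> 0" by real_asymp
  have "(\<lambda>n. 2 + ((L n)^2 - 2 * real n) / ln (real n) * (ln (real n) / real n)) \<longlonglongrightarrow> 2 + (- 1 / 2) * 0"
    by (rule tendsto_add[OF tendsto_const tendsto_mult[OF L_log_lim lr]])
  then have "(\<lambda>n. 2 + ((L n)^2 - 2 * real n) / ln (real n) * (ln (real n) / real n)) \<longlonglongrightarrow> 2" by simp
  then show ?thesis
  proof (rule Lim_transform_eventually)
    show "\<forall>\<^sub>F n in sequentially. 2 + ((L n)^2 - 2 * real n) / ln (real n) * (ln (real n) / real n) = (L n)^2 / real n"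
    proof (rule eventually_sequentiallyI[of 2])
      fix n :: nat assume "n \<ge> 2"
      then have "ln (real n) > 0" "real n > 0" by simp_all
      then have "((L n)^2 - 2 * real n) / ln (real n) * (ln (real n) / real n) = ((L n)^2 - 2 * real n) / real n"
        by simp
      also have "\<dots> = (L n)^2 / real n - 2" using \<open>real n > 0\<close> by (simp add: diff_divide_distrib)
      finally show "2 + ((L n)^2 - 2 * real n) / ln (real n) * (ln (real n) / real n) = (L n)^2 / real n"
        by simp
    qed
  qed
qed


definition gq :: "real \<Rightarrow> real \<Rightarrow> real" where
  "gq s t = (1 - t powr s) / (1 - t)"

definition Gd :: "real \<Rightarrow> real \<Rightarrow> real" where
  "Gd s t = t powr s * (- ln t) / (1 - t)"

lemma powr_nat_eq: "t \<ge> 0 \<Longrightarrow> k \<ge> 1 \<Longrightarrow> t powr real k = t ^ k"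
  by (rule powr_realpow') auto

lemma gq_nat: assumes "0 \<le> t" "t < 1" "n \<ge> 1" shows "gq (real n) t = (\<Sum>k<n. t^k)"
  using assms by (simp add: gq_def powr_nat_eq sum_gp_strict)

lemma gq_mono: assumes "0 \<le> t" "t < 1" "a \<le> b" shows "gq a t \<le> gq b t"
proof -
  have "t powr b \<le> t powr a" using assms by (intro powr_mono') auto
  then show ?thesis using assms unfolding gq_def by (intro divide_right_mono) auto
qed

lemma gq_nonneg: assumes "0 \<le> t" "t < 1" "0 \<le> s" shows "0 \<le> gq s t"
proof -
  have "t powr s \<le> t powr 0" using assms by (intro powr_mono') auto
  also have "\<dots> \<le> 1" by simp
  finally show ?thesis using assms unfolding gq_def by simp
qed

lemma gq_le: assumes "0 \<le> t" "t < 1" "0 \<le> s" shows "gq s t \<le> real (nat \<lceil>s\<rceil> + 1)"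
proof -
  have "gq s t \<le> gq (real (nat \<lceil>s\<rceil> + 1)) t" using assms
    by (intro gq_mono) (auto, linarith)
  also have "\<dots> = (\<Sum>k<nat \<lceil>s\<rceil> + 1. t^k)" using assms by (intro gq_nat) auto
  also have "\<dots> \<le> (\<Sum>k<nat \<lceil>s\<rceil> + 1. 1)" using assms by (intro sum_mono power_le_one) auto
  finally show ?thesis by simp
qed

lemma Gd_ge: assumes "0 \<le> t" "t < 1" shows "t powr s \<le> Gd s t"
proof (cases "t = 0")
  case True then show ?thesis by (simp add: Gd_def)
next
  case False
  then have t: "0 < t" using assms by simp
  have "ln t \<le> t - 1" using t by (rule ln_le_minus_one)
  then have "1 \<le> - ln t / (1 - t)" using assms by (simp add: field_simps)
  then have "t powr s * 1 \<le> t powr s * (- ln t / (1 - t))" by (intro mult_left_mono) auto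
  then show ?thesis by (simp add: Gd_def)
qed

lemma Gd_le: assumes "0 \<le> t" "t < 1" shows "Gd s t \<le> t powr (s - 1)"
proof (cases "t = 0")
  case True then show ?thesis by (simp add: Gd_def)
next
  case False
  then have t: "0 < t" using assms by simp
  have "ln (1/t) \<le> 1/t - 1" using t by (intro ln_le_minus_one) auto
  then have "- ln t \<le> 1/t - 1" using t by (simp add: ln_div)
  then have a: "t * (- ln t) \<le> 1 - t" using t by (simp add: field_simps)
  have p: "t powr s = t powr (s - 1) * t" using t by (simp add: powr_diff)
  have "Gd s t = t powr (s - 1) * (t * (- ln t)) / (1 - t)" by (simp add: Gd_def p)
  also have "\<dots> \<le> t powr (s - 1) * (1 - t) / (1 - t)"
    using a assms by (intro divide_right_mono mult_left_mono) auto
  also have "\<dots> = t powr (s - 1)" using assms by simp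
  finally show ?thesis .
qed

lemma Gd_nonneg: assumes "0 \<le> t" "t < 1" shows "0 \<le> Gd s t"
  using Gd_ge[OF assms, of s] by (meson order_trans powr_ge_zero)

lemma Gd_le_inv: assumes "0 \<le> t" "t < 1" "0 < u" "u \<le> 1" shows "Gd u t \<le> 1 / u"
proof (cases "t = 0")
  case True then show ?thesis using assms by (simp add: Gd_def)
next
  case False
  then have t: "0 < t" using assms by simp
  define x where "x = t powr u"
  have x: "0 < x" using t by (simp add: x_def)
  have "ln (1/x) \<le> 1/x - 1" using x by (intro ln_le_minus_one) auto
  moreover have "ln (1/x) = - u * ln t" using t by (simp add: x_def ln_div ln_powr)
  ultimately have "- u * ln t \<le> 1/x - 1" by simp
  then have h: "x * (- u * ln t) \<le> x * (1/x - 1)" using x by (intro mult_left_mono) auto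
  have "u * (x * (- ln t)) = x * (- u * ln t)" by (simp add: algebra_simps)
  also have "\<dots> \<le> x * (1/x - 1)" by (rule h)
  also have "\<dots> = 1 - x" using x by (simp add: field_simps)
  finally have b: "u * (x * (- ln t)) \<le> 1 - x" .
  have "t powr 1 \<le> t powr u" using assms by (intro powr_mono') auto
  then have c: "1 - x \<le> 1 - t" using t by (simp add: x_def)
  have "u * Gd u t = u * (x * (- ln t)) / (1 - t)" by (simp add: Gd_def x_def)
  also have "\<dots> \<le> (1 - t) / (1 - t)" using b c assms by (intro divide_right_mono) auto
  also have "\<dots> = 1" using assms by simp
  finally have "u * Gd u t \<le> 1" .
  then show ?thesis using assms by (simp add: field_simps)
qed

lemma Gd_bound: assumes "0 \<le> t" "t < 1" "0 < c" "c \<le> u" shows "Gd u t \<le> max 1 (1 / c)"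
proof (cases "u \<le> 1")
  case True
  then have "Gd u t \<le> 1 / u" using assms by (intro Gd_le_inv) auto
  also have "\<dots> \<le> 1 / c" using assms by (intro divide_left_mono) auto
  finally show ?thesis by simp
next
  case False
  have "Gd u t \<le> t powr (u - 1)" using assms(1,2) by (rule Gd_le)
  also have "\<dots> \<le> t powr 0" using assms False by (intro powr_mono') auto
  also have "\<dots> \<le> 1" by simp
  finally show ?thesis by simp
qed

lemma gq_deriv: assumes "0 \<le> t" "t < 1" shows "((\<lambda>s. gq s t) has_real_derivative Gd s t) (at s)"
proof (cases "t = 0")
  case True
  then show ?thesis by (simp add: gq_def Gd_def)
next
  case False
  then have t: "0 < t" using assms by simp
  have "((\<lambda>s. (1 - t powr s) / (1 - t)) has_real_derivative (0 - t powr s * ln t) / (1 - t)) (at s)"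
    using t assms by (intro derivative_eq_intros) auto
  then show ?thesis unfolding gq_def Gd_def by simp
qed


locale MU =
  fixes \<mu> :: "real measure"
  assumes P: "prob_space \<mu>"
    and S: "sets \<mu> = sets borel"
    and E: "emeasure \<mu> {0..1} = 1"
    and M: "\<forall>n. (\<integral>t. t ^ n \<partial>\<mu>) = mseq n"
begin

interpretation prob_space \<mu> by (rule P)

lemma space_UNIV: "space \<mu> = UNIV"
  using sets_eq_imp_space_eq[OF S] by simp

lemma meas: "f \<in> borel_measurable borel \<Longrightarrow> f \<in> borel_measurable \<mu>"
  by (subst measurable_cong_sets[OF S, of borel borel]) auto

lemma moment: "(\<integral>t. t ^ n \<partial>\<mu>) = 1 / L (Suc n)"
  using M by (simp add: mseq_eq m0_def)

lemma AE01: "AE t in \<mu>. 0 \<le> t \<and> t \<le> 1"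
proof -
  have "emeasure \<mu> {0..1} = ennreal (measure \<mu> {0..1})" by (rule emeasure_eq_measure)
  then have "prob {0..1} = 1" using E by simp
  then have "AE t in \<mu>. t \<in> {0..1}" by (rule AE_prob_1)
  then show ?thesis by simp
qed

lemma int_bound:
  fixes f :: "real \<Rightarrow> real" and B :: real
  assumes b: "\<And>t. 0 \<le> t \<Longrightarrow> t < 1 \<Longrightarrow> \<bar>f t\<bar> \<le> B"
    and ae: "AE t in \<mu>. 0 \<le> t \<and> t < 1" and m: "f \<in> borel_measurable borel"
  shows "integrable \<mu> f"
proof (rule integrable_const_bound[where B=B])
  show "AE x in \<mu>. norm (f x) \<le> B" using ae by eventually_elim (use b in auto)
  show "f \<in> borel_measurable \<mu>" using m by (rule meas)
qed

lemma int_pow: "integrable \<mu> (\<lambda>t. t ^ n)"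
proof (rule integrable_const_bound[where B=1])
  show "AE x in \<mu>. norm (x ^ n) \<le> 1"
    using AE01 by eventually_elim (simp add: abs_le_iff power_le_one power_abs)
  show "(\<lambda>t. t ^ n) \<in> borel_measurable \<mu>" by (intro meas) measurable
qed

lemma atom1: "measure \<mu> {1} = 0"
proof -
  have le: "measure \<mu> {1} \<le> 1 / L (Suc n)" for n
  proof -
    have "measure \<mu> {1} = (\<integral>t. indicator {1} t \<partial>\<mu>)" by (simp add: space_UNIV)
    also have "\<dots> \<le> (\<integral>t. t ^ n \<partial>\<mu>)"
    proof (rule integral_mono_AE)
      show "integrable \<mu> (indicator {1} :: real \<Rightarrow> real)"
      proof (rule integrable_const_bound[where B=1])
        show "AE x in \<mu>. norm (indicator {1} x :: real) \<le> 1" by (simp add: indicator_def)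
        show "(indicator {1} :: real \<Rightarrow> real) \<in> borel_measurable \<mu>" by (intro meas) measurable
      qed
      show "integrable \<mu> (\<lambda>t. t ^ n)" by (rule int_pow)
      show "AE t in \<mu>. indicator {1} t \<le> t ^ n"
        using AE01 by eventually_elim (auto simp: indicator_def)
    qed
    also have "\<dots> = 1 / L (Suc n)" by (rule moment)
    finally show ?thesis .
  qed
  have lim: "(\<lambda>n. 1 / L (Suc n)) \<longlonglongrightarrow> 0"
  proof -
    have "filterlim (\<lambda>n. L (Suc n)) at_top sequentially"
      using L_at_top by (rule filterlim_compose) (rule filterlim_Suc)
    then have "((\<lambda>n. inverse (L (Suc n))) \<longlongrightarrow> 0) sequentially"
      by (rule tendsto_inverse_0_at_top)
    then show ?thesis by (simp add: inverse_eq_divide)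
  qed
  have "measure \<mu> {1} \<le> 0"
    using le by (intro LIMSEQ_le[OF tendsto_const lim]) auto
  then show ?thesis using measure_nonneg[of \<mu> "{1}"] by linarith
qed

lemma AE01': "AE t in \<mu>. 0 \<le> t \<and> t < 1"
proof -
  have "{1} \<in> null_sets \<mu>" using atom1 emeasure_eq_measure by (auto simp: S null_sets_def)
  then have "AE t in \<mu>. t \<notin> {1}" by (rule AE_not_in)
  with AE01 show ?thesis by eventually_elim auto
qed

lemma fmu_alt: "fmu \<mu> s = (\<integral>t. gq s t \<partial>\<mu>)"
  by (simp add: fmu_def gq_def)

lemma meas_gq: "(\<lambda>t. gq s t) \<in> borel_measurable borel"
  unfolding gq_def by measurable

lemma meas_Gd: "(\<lambda>t. Gd s t) \<in> borel_measurable borel"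
  unfolding Gd_def by measurable

lemma int_gq: "s \<ge> 0 \<Longrightarrow> integrable \<mu> (\<lambda>t. gq s t)"
  by (rule int_bound[where B="real (nat \<lceil>s\<rceil> + 1)", OF _ AE01' meas_gq])
     (use gq_nonneg gq_le in auto)

lemma int_Gd: "s > 0 \<Longrightarrow> integrable \<mu> (\<lambda>t. Gd s t)"
  by (rule int_bound[where B="max 1 (1/s)", OF _ AE01' meas_Gd])
     (use Gd_nonneg Gd_bound in \<open>auto simp del: max_less_iff_conj\<close>)

lemma int_powr: "s \<ge> 0 \<Longrightarrow> integrable \<mu> (\<lambda>t. t powr s)"
proof (rule int_bound[where B=1, OF _ AE01'])
  fix t :: real assume "s \<ge> 0" "0 \<le> t" "t < 1"
  then have "t powr s \<le> t powr 0" by (intro powr_mono') auto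
  also have "\<dots> \<le> 1" by simp
  finally show "\<bar>t powr s\<bar> \<le> 1" by simp
next
  show "(\<lambda>t. t powr s) \<in> borel_measurable borel" by measurable
qed

lemma fmu_nat: "n \<ge> 1 \<Longrightarrow> fmu \<mu> (real n) = L n"
proof -
  assume n: "n \<ge> 1"
  have "fmu \<mu> (real n) = (\<integral>t. (\<Sum>k<n. t^k) \<partial>\<mu>)"
    unfolding fmu_alt
  proof (rule integral_cong_AE)
    show "(\<lambda>t. gq (real n) t) \<in> borel_measurable \<mu>" by (intro meas meas_gq)
    show "(\<lambda>t. \<Sum>k<n. t^k) \<in> borel_measurable \<mu>" by (intro meas) measurable
    show "AE t in \<mu>. gq (real n) t = (\<Sum>k<n. t^k)"
      using AE01' by eventually_elim (use n gq_nat in blast)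
  qed
  also have "\<dots> = (\<Sum>k<n. (\<integral>t. t^k \<partial>\<mu>))" using int_pow by (simp add: integral_sum)
  also have "\<dots> = (\<Sum>k<n. 1 / L (Suc k))" by (simp add: moment)
  also have "\<dots> = L n"
  proof -
    have "(\<Sum>k<Suc j. 1 / L (Suc k)) = L (Suc j)" for j
    proof (induction j)
      case 0 then show ?case by simp
    next
      case (Suc j) then show ?case using L_rec[of "Suc j"] by simp
    qed
    moreover obtain j where "n = Suc j" using n by (cases n) auto
    ultimately show ?thesis by simp
  qed
  finally show ?thesis .
qed

end


lemma c_lim: "(\<lambda>n. L n / sqrt (2 * real n)) \<longlonglongrightarrow> 1"
proof -
  have "(\<lambda>n. sqrt ((L n)^2 / real n / 2)) \<longlonglongrightarrow> sqrt (2 / 2)"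
    by (intro tendsto_real_sqrt tendsto_divide L_sq_lim tendsto_const) simp
  moreover have "sqrt ((L n)^2 / real n / 2) = L n / sqrt (2 * real n)" for n
  proof -
    have "sqrt ((L n)^2 / real n / 2) = sqrt ((L n)^2) / sqrt (real n) / sqrt 2"
      by (simp only: real_sqrt_divide)
    also have "\<dots> = L n / sqrt (2 * real n)"
      using L_nonneg[of n] by (simp add: real_sqrt_mult divide_divide_eq_left mult.commute)
    finally show ?thesis .
  qed
  ultimately show ?thesis by simp
qed

lemma a_lim: "(\<lambda>n. L n / sqrt (2 * (real n + 1))) \<longlonglongrightarrow> 1"
proof -
  have r: "(\<lambda>n. sqrt (2 * real n) / sqrt (2 * (real n + 1))) \<longlonglongrightarrow> 1" by real_asymp
  have "(\<lambda>n. L n / sqrt (2 * real n) * (sqrt (2 * real n) / sqrt (2 * (real n + 1)))) \<longlonglongrightarrow> 1 * 1"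
    by (rule tendsto_mult[OF c_lim r])
  then have lim: "(\<lambda>n. L n / sqrt (2 * real n) * (sqrt (2 * real n) / sqrt (2 * (real n + 1)))) \<longlonglongrightarrow> 1" by simp
  show ?thesis
  proof (rule Lim_transform_eventually[OF lim], intro eventually_sequentiallyI[of 1])
    fix n :: nat assume "n \<ge> 1"
    then have "sqrt (2 * real n) > 0" by simp
    then show "L n / sqrt (2 * real n) * (sqrt (2 * real n) / sqrt (2 * (real n + 1))) = L n / sqrt (2 * (real n + 1))"
      by simp
  qed
qed

lemma b_lim: "(\<lambda>n. L (Suc n) / sqrt (2 * real n)) \<longlonglongrightarrow> 1"
proof -
  have r: "(\<lambda>n. sqrt (2 * (real n + 1)) / sqrt (2 * real n)) \<longlonglongrightarrow> 1" by real_asymp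
  have c1: "(\<lambda>n. L (Suc n) / sqrt (2 * real (Suc n))) \<longlonglongrightarrow> 1"
    using c_lim by (rule LIMSEQ_Suc)
  have "(\<lambda>n. L (Suc n) / sqrt (2 * real (Suc n)) * (sqrt (2 * (real n + 1)) / sqrt (2 * real n))) \<longlonglongrightarrow> 1 * 1"
    by (rule tendsto_mult[OF c1 r])
  then have lim: "(\<lambda>n. L (Suc n) / sqrt (2 * real (Suc n)) * (sqrt (2 * (real n + 1)) / sqrt (2 * real n))) \<longlonglongrightarrow> 1" by simp
  show ?thesis
  proof (rule Lim_transform_eventually[OF lim], intro always_eventually allI)
    fix n :: nat
    have "sqrt (2 * (real n + 1)) > 0" by simp
    then show "L (Suc n) / sqrt (2 * real (Suc n)) * (sqrt (2 * (real n + 1)) / sqrt (2 * real n)) = L (Suc n) / sqrt (2 * real n)"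
      by (simp add: add.commute)
  qed
qed

lemma p_lim: "(\<lambda>n. sqrt (2 * real n) / L (n + 2)) \<longlonglongrightarrow> 1"
proof -
  have r: "(\<lambda>n. sqrt (2 * real n) / sqrt (2 * real (n + 2))) \<longlonglongrightarrow> 1" by real_asymp
  have c2: "(\<lambda>n. L (n + 2) / sqrt (2 * real (n + 2))) \<longlonglongrightarrow> 1"
    using c_lim by (rule LIMSEQ_ignore_initial_segment)
  have "(\<lambda>n. (sqrt (2 * real n) / sqrt (2 * real (n + 2))) / (L (n + 2) / sqrt (2 * real (n + 2)))) \<longlonglongrightarrow> 1 / 1"
    by (rule tendsto_divide[OF r c2]) simp
  moreover have "(sqrt (2 * real n) / sqrt (2 * real (n + 2))) / (L (n + 2) / sqrt (2 * real (n + 2)))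
      = sqrt (2 * real n) / L (n + 2)" for n
  proof -
    have "sqrt (2 * real (n + 2)) > 0" by simp
    then show ?thesis by (simp add: divide_divide_eq_left)
  qed
  ultimately show ?thesis by simp
qed

lemma q_lim: "(\<lambda>n. sqrt (2 * (real n + 1)) / L n) \<longlonglongrightarrow> 1"
proof -
  have r: "(\<lambda>n. sqrt (2 * (real n + 1)) / sqrt (2 * real n)) \<longlonglongrightarrow> 1" by real_asymp
  have "(\<lambda>n. (sqrt (2 * (real n + 1)) / sqrt (2 * real n)) / (L n / sqrt (2 * real n))) \<longlonglongrightarrow> 1 / 1"
    by (rule tendsto_divide[OF r c_lim]) simp
  then have lim: "(\<lambda>n. (sqrt (2 * (real n + 1)) / sqrt (2 * real n)) / (L n / sqrt (2 * real n))) \<longlonglongrightarrow> 1" by simp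
  show ?thesis
  proof (rule Lim_transform_eventually[OF lim], intro eventually_sequentiallyI[of 1])
    fix n :: nat assume "n \<ge> 1"
    then have "sqrt (2 * real n) > 0" by simp
    then show "(sqrt (2 * (real n + 1)) / sqrt (2 * real n)) / (L n / sqrt (2 * real n)) = sqrt (2 * (real n + 1)) / L n"
      by (simp add: divide_divide_eq_left)
  qed
qed

lemma N_lim: "filterlim (\<lambda>s::real. nat \<lfloor>s\<rfloor>) sequentially at_top"
  by (rule filterlim_compose[OF filterlim_nat_sequentially filterlim_floor_sequentially])

lemma floor_facts:
  assumes "s \<ge> (1::real)"
  shows "real (nat \<lfloor>s\<rfloor>) \<le> s" "s < real (nat \<lfloor>s\<rfloor>) + 1" "nat \<lfloor>s\<rfloor> \<ge> 1"
  using assms by (auto simp: le_nat_iff)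

lemma quot_bound:
  assumes t: "0 \<le> t" "t < 1" and s: "s > 0" and h: "h \<noteq> 0" "\<bar>h\<bar> < s / 2"
  shows "\<bar>(gq (s + h) t - gq s t) / h\<bar> \<le> max 1 (2 / s)"
proof (cases "h > 0")
  case True
  have "\<exists>z. s < z \<and> z < s + h \<and> gq (s + h) t - gq s t = (s + h - s) * Gd z t"
    by (rule MVT2[of s "s + h" "\<lambda>u. gq u t" "\<lambda>u. Gd u t"]) (use True gq_deriv[OF t] in auto)
  then obtain z where z: "s < z" "z < s + h" "gq (s + h) t - gq s t = (s + h - s) * Gd z t"
    by blast
  then have "(gq (s + h) t - gq s t) / h = Gd z t" using True by simp
  moreover have "Gd z t \<le> max 1 (1 / (s / 2))" using z s by (intro Gd_bound t) auto
  moreover have "0 \<le> Gd z t" by (rule Gd_nonneg[OF t])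
  ultimately show ?thesis by simp
next
  case False
  then have hn: "h < 0" using h by simp
  have "\<exists>z. s + h < z \<and> z < s \<and> gq s t - gq (s + h) t = (s - (s + h)) * Gd z t"
    by (rule MVT2[of "s + h" s "\<lambda>u. gq u t" "\<lambda>u. Gd u t"]) (use hn gq_deriv[OF t] in auto)
  then obtain z where z: "s + h < z" "z < s" "gq s t - gq (s + h) t = (s - (s + h)) * Gd z t"
    by blast
  then have "(gq (s + h) t - gq s t) / h = Gd z t" using hn by (simp add: field_simps)
  moreover have "Gd z t \<le> max 1 (1 / (s / 2))" using z s h by (intro Gd_bound t) auto
  moreover have "0 \<le> Gd z t" by (rule Gd_nonneg[OF t])
  ultimately show ?thesis by simp
qed

context MU
begin

interpretation prob_space \<mu> by (rule P)

lemma fmu_mono: assumes "0 \<le> a" "a \<le> b" shows "fmu \<mu> a \<le> fmu \<mu> b"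
  unfolding fmu_alt
proof (rule integral_mono_AE)
  show "integrable \<mu> (gq a)" "integrable \<mu> (gq b)" using assms int_gq by auto
  show "AE t in \<mu>. gq a t \<le> gq b t" using AE01' by eventually_elim (use assms gq_mono in auto)
qed

lemma fmu_nonneg: assumes "0 \<le> a" shows "0 \<le> fmu \<mu> a"
  unfolding fmu_alt
  by (rule integral_nonneg_AE) (use AE01' in \<open>eventually_elim, use assms gq_nonneg in auto\<close>)

lemma f_lim: "((\<lambda>s. fmu \<mu> s / sqrt (2 * s)) \<longlongrightarrow> 1) at_top"
proof (rule tendsto_sandwich)
  show "((\<lambda>s::real. L (nat \<lfloor>s\<rfloor>) / sqrt (2 * (real (nat \<lfloor>s\<rfloor>) + 1))) \<longlongrightarrow> 1) at_top"
    using filterlim_compose[OF a_lim N_lim] by simp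
  show "((\<lambda>s::real. L (Suc (nat \<lfloor>s\<rfloor>)) / sqrt (2 * real (nat \<lfloor>s\<rfloor>))) \<longlongrightarrow> 1) at_top"
    using filterlim_compose[OF b_lim N_lim] by simp
  show "\<forall>\<^sub>F s in at_top. L (nat \<lfloor>s\<rfloor>) / sqrt (2 * (real (nat \<lfloor>s\<rfloor>) + 1)) \<le> fmu \<mu> s / sqrt (2 * s)"
  proof (rule eventually_at_top_linorderI[of 1])
    fix s :: real assume s: "s \<ge> 1"
    define n where "n = nat \<lfloor>s\<rfloor>"
    have n: "real n \<le> s" "s < real n + 1" "n \<ge> 1" using floor_facts[OF s] by (simp_all add: n_def)
    have "L n = fmu \<mu> (real n)" using n by (simp add: fmu_nat)
    also have "\<dots> \<le> fmu \<mu> s" using n by (intro fmu_mono) auto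
    finally have "L n \<le> fmu \<mu> s" .
    then have "L n / sqrt (2 * (real n + 1)) \<le> fmu \<mu> s / sqrt (2 * s)"
      using n s by (intro frac_le fmu_nonneg) auto
    then show "L (nat \<lfloor>s\<rfloor>) / sqrt (2 * (real (nat \<lfloor>s\<rfloor>) + 1)) \<le> fmu \<mu> s / sqrt (2 * s)"
      by (simp add: n_def)
  qed
  show "\<forall>\<^sub>F s in at_top. fmu \<mu> s / sqrt (2 * s) \<le> L (Suc (nat \<lfloor>s\<rfloor>)) / sqrt (2 * real (nat \<lfloor>s\<rfloor>))"
  proof (rule eventually_at_top_linorderI[of 1])
    fix s :: real assume s: "s \<ge> 1"
    define n where "n = nat \<lfloor>s\<rfloor>"
    have n: "real n \<le> s" "s < real n + 1" "n \<ge> 1" using floor_facts[OF s] by (simp_all add: n_def)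
    have "fmu \<mu> s \<le> fmu \<mu> (real (Suc n))" using n s by (intro fmu_mono) auto
    also have "\<dots> = L (Suc n)" by (rule fmu_nat) simp
    finally have "fmu \<mu> s \<le> L (Suc n)" .
    then have "fmu \<mu> s / sqrt (2 * s) \<le> L (Suc n) / sqrt (2 * real n)"
      using n s by (intro frac_le L_nonneg) auto
    then show "fmu \<mu> s / sqrt (2 * s) \<le> L (Suc (nat \<lfloor>s\<rfloor>)) / sqrt (2 * real (nat \<lfloor>s\<rfloor>))"
      by (simp add: n_def)
  qed
qed

end


context MU
begin

interpretation prob_space \<mu> by (rule P)

lemma fmu_deriv:
  assumes s: "s > 0"
  shows "(fmu \<mu> has_real_derivative (\<integral>t. Gd s t \<partial>\<mu>)) (at s)"
proof -
  let ?F = "\<integral>t. Gd s t \<partial>\<mu>"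
  have "((\<lambda>h. (fmu \<mu> (s + h) - fmu \<mu> s) / h) \<longlongrightarrow> ?F) (at 0 within UNIV)"
  proof (subst tendsto_at_iff_sequentially, intro allI impI)
    fix X :: "nat \<Rightarrow> real" assume X0: "\<forall>i. X i \<in> UNIV - {0}" and X: "X \<longlonglongrightarrow> 0"
    obtain N where N: "\<And>i. i \<ge> N \<Longrightarrow> norm (X i - 0) < s / 2"
      using LIMSEQ_D[OF X, of "s / 2"] s by auto
    define Y where "Y i = X (i + N)" for i
    have Yb: "Y i \<noteq> 0" "\<bar>Y i\<bar> < s / 2" for i
      using X0 N[of "i + N"] by (auto simp: Y_def)
    have Y: "Y \<longlonglongrightarrow> 0" using X unfolding Y_def by (rule LIMSEQ_ignore_initial_segment)
    have Yat: "filterlim Y (at 0) sequentially" using Y Yb unfolding filterlim_at by auto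
    define q where "q i t = (gq (s + Y i) t - gq s t) / Y i" for i t
    have int_eq: "(fmu \<mu> (s + Y i) - fmu \<mu> s) / Y i = (\<integral>t. q i t \<partial>\<mu>)" for i
    proof -
      have pos: "s + Y i \<ge> 0" using Yb(2)[of i] s by linarith
      have "(\<integral>t. q i t \<partial>\<mu>) = (\<integral>t. gq (s + Y i) t - gq s t \<partial>\<mu>) / Y i"
        unfolding q_def by (rule integral_divide_zero)
      also have "\<dots> = (fmu \<mu> (s + Y i) - fmu \<mu> s) / Y i"
        using int_gq[OF pos] int_gq[of s] s by (simp add: fmu_alt)
      finally show ?thesis by simp
    qed
    have "(\<lambda>i. \<integral>t. q i t \<partial>\<mu>) \<longlonglongrightarrow> ?F"
    proof (rule integral_dominated_convergence[where w="\<lambda>_. max 1 (2 / s)"])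
      show "(\<lambda>t. Gd s t) \<in> borel_measurable \<mu>" by (intro meas meas_Gd)
      show "(\<lambda>t. q i t) \<in> borel_measurable \<mu>" for i
        unfolding q_def by (intro meas borel_measurable_divide borel_measurable_diff meas_gq borel_measurable_const)
      show "integrable \<mu> (\<lambda>_. max 1 (2 / s))" by simp
      show "AE t in \<mu>. (\<lambda>i. q i t) \<longlonglongrightarrow> Gd s t"
        using AE01'
      proof eventually_elim
        fix t :: real assume t: "0 \<le> t \<and> t < 1"
        have "((\<lambda>h. (gq (s + h) t - gq s t) / h) \<longlongrightarrow> Gd s t) (at 0)"
          using gq_deriv[of t s] t unfolding DERIV_def by auto
        from filterlim_compose[OF this Yat] show "(\<lambda>i. q i t) \<longlonglongrightarrow> Gd s t"
          by (simp add: q_def)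
      qed
      show "AE t in \<mu>. norm (q i t) \<le> max 1 (2 / s)" for i
        using AE01'
      proof eventually_elim
        fix t :: real assume t: "0 \<le> t \<and> t < 1"
        then show "norm (q i t) \<le> max 1 (2 / s)"
          unfolding q_def real_norm_def using quot_bound[of t s "Y i"] s Yb[of i] by auto
      qed
    qed
    then have "(\<lambda>i. (fmu \<mu> (s + X (i + N)) - fmu \<mu> s) / X (i + N)) \<longlonglongrightarrow> ?F"
      using int_eq by (simp add: Y_def)
    then have "(\<lambda>i. (fmu \<mu> (s + X i) - fmu \<mu> s) / X i) \<longlonglongrightarrow> ?F"
      by (rule LIMSEQ_offset)
    then show "((\<lambda>h. (fmu \<mu> (s + h) - fmu \<mu> s) / h) \<circ> X) \<longlonglongrightarrow> ?F"
      by (simp add: comp_def)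
  qed
  then show ?thesis unfolding DERIV_def by simp
qed

lemma int_powr_nat: "k \<ge> 1 \<Longrightarrow> (\<integral>t. t powr real k \<partial>\<mu>) = 1 / L (Suc k)"
proof -
  assume k: "k \<ge> 1"
  have "(\<integral>t. t powr real k \<partial>\<mu>) = (\<integral>t. t ^ k \<partial>\<mu>)"
  proof (rule integral_cong_AE)
    show "(\<lambda>t. t powr real k) \<in> borel_measurable \<mu>" by (intro meas) measurable
    show "(\<lambda>t. t ^ k) \<in> borel_measurable \<mu>" by (intro meas) measurable
    show "AE t in \<mu>. t powr real k = t ^ k"
      using AE01' by eventually_elim (use k powr_nat_eq in auto)
  qed
  then show ?thesis by (simp add: moment)
qed

lemma powr_int_mono: assumes "0 \<le> a" "a \<le> b" shows "(\<integral>t. t powr b \<partial>\<mu>) \<le> (\<integral>t. t powr a \<partial>\<mu>)"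
proof (rule integral_mono_AE)
  show "integrable \<mu> (\<lambda>t. t powr b)" "integrable \<mu> (\<lambda>t. t powr a)" using assms int_powr by auto
  show "AE t in \<mu>. t powr b \<le> t powr a"
    using AE01' by eventually_elim (use assms in \<open>auto intro: powr_mono'\<close>)
qed

lemma F_lower: assumes s: "s \<ge> 2" shows "1 / L (nat \<lfloor>s\<rfloor> + 2) \<le> (\<integral>t. Gd s t \<partial>\<mu>)"
proof -
  define n where "n = nat \<lfloor>s\<rfloor>"
  have n: "real n \<le> s" "s < real n + 1" "n \<ge> 1" using floor_facts[of s] s by (simp_all add: n_def)
  have "1 / L (n + 2) = (\<integral>t. t powr real (n + 1) \<partial>\<mu>)" by (subst int_powr_nat) auto
  also have "\<dots> \<le> (\<integral>t. t powr s \<partial>\<mu>)" using n s by (intro powr_int_mono) auto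
  also have "\<dots> \<le> (\<integral>t. Gd s t \<partial>\<mu>)"
  proof (rule integral_mono_AE)
    show "integrable \<mu> (\<lambda>t. t powr s)" using s int_powr by auto
    show "integrable \<mu> (\<lambda>t. Gd s t)" using s int_Gd by auto
    show "AE t in \<mu>. t powr s \<le> Gd s t" using AE01' by eventually_elim (use Gd_ge in auto)
  qed
  finally show ?thesis by (simp add: n_def)
qed

lemma F_upper: assumes s: "s \<ge> 2" shows "(\<integral>t. Gd s t \<partial>\<mu>) \<le> 1 / L (nat \<lfloor>s\<rfloor>)"
proof -
  define n where "n = nat \<lfloor>s\<rfloor>"
  have n: "real n \<le> s" "s < real n + 1" "n \<ge> 2" using floor_facts[of s] s by (simp_all add: n_def le_nat_iff le_floor_iff)
  have "(\<integral>t. Gd s t \<partial>\<mu>) \<le> (\<integral>t. t powr (s - 1) \<partial>\<mu>)"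
  proof (rule integral_mono_AE)
    show "integrable \<mu> (\<lambda>t. t powr (s - 1))" using s int_powr by auto
    show "integrable \<mu> (\<lambda>t. Gd s t)" using s int_Gd by auto
    show "AE t in \<mu>. Gd s t \<le> t powr (s - 1)" using AE01' by eventually_elim (use Gd_le in auto)
  qed
  also have "\<dots> \<le> (\<integral>t. t powr real (n - 1) \<partial>\<mu>)" using n s by (intro powr_int_mono) auto
  also have "\<dots> = 1 / L (Suc (n - 1))" using n by (intro int_powr_nat) auto
  also have "\<dots> = 1 / L n" using n by simp
  finally show ?thesis by (simp add: n_def)
qed

lemma deriv_lim: "((\<lambda>s. deriv (fmu \<mu>) s * sqrt (2 * s)) \<longlongrightarrow> 1) at_top"
proof (rule tendsto_sandwich)
  show "((\<lambda>s::real. sqrt (2 * real (nat \<lfloor>s\<rfloor>)) / L (nat \<lfloor>s\<rfloor> + 2)) \<longlongrightarrow> 1) at_top"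
    using filterlim_compose[OF p_lim N_lim] by simp
  show "((\<lambda>s::real. sqrt (2 * (real (nat \<lfloor>s\<rfloor>) + 1)) / L (nat \<lfloor>s\<rfloor>)) \<longlongrightarrow> 1) at_top"
    using filterlim_compose[OF q_lim N_lim] by simp
  show "\<forall>\<^sub>F s in at_top. sqrt (2 * real (nat \<lfloor>s\<rfloor>)) / L (nat \<lfloor>s\<rfloor> + 2) \<le> deriv (fmu \<mu>) s * sqrt (2 * s)"
  proof (rule eventually_at_top_linorderI[of 2])
    fix s :: real assume s: "s \<ge> 2"
    define n where "n = nat \<lfloor>s\<rfloor>"
    have n: "real n \<le> s" "s < real n + 1" "n \<ge> 1" using floor_facts[of s] s by (simp_all add: n_def)
    have d: "deriv (fmu \<mu>) s = (\<integral>t. Gd s t \<partial>\<mu>)" using s by (intro DERIV_imp_deriv fmu_deriv) auto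
    have F0: "0 \<le> (\<integral>t. Gd s t \<partial>\<mu>)"
      by (rule integral_nonneg_AE) (use AE01' in \<open>eventually_elim, use Gd_nonneg in auto\<close>)
    have "sqrt (2 * real n) / L (n + 2) = 1 / L (n + 2) * sqrt (2 * real n)" by simp
    also have "\<dots> \<le> (\<integral>t. Gd s t \<partial>\<mu>) * sqrt (2 * s)"
      using F_lower[OF s] n L_nonneg[of "n+2"] F0 by (intro mult_mono) (auto simp: n_def)
    finally show "sqrt (2 * real (nat \<lfloor>s\<rfloor>)) / L (nat \<lfloor>s\<rfloor> + 2) \<le> deriv (fmu \<mu>) s * sqrt (2 * s)"
      by (simp add: n_def d)
  qed
  show "\<forall>\<^sub>F s in at_top. deriv (fmu \<mu>) s * sqrt (2 * s) \<le> sqrt (2 * (real (nat \<lfloor>s\<rfloor>) + 1)) / L (nat \<lfloor>s\<rfloor>)"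
  proof (rule eventually_at_top_linorderI[of 2])
    fix s :: real assume s: "s \<ge> 2"
    define n where "n = nat \<lfloor>s\<rfloor>"
    have n: "real n \<le> s" "s < real n + 1" "n \<ge> 1" using floor_facts[of s] s by (simp_all add: n_def)
    have d: "deriv (fmu \<mu>) s = (\<integral>t. Gd s t \<partial>\<mu>)" using s by (intro DERIV_imp_deriv fmu_deriv) auto
    have F0: "0 \<le> (\<integral>t. Gd s t \<partial>\<mu>)"
      by (rule integral_nonneg_AE) (use AE01' in \<open>eventually_elim, use Gd_nonneg in auto\<close>)
    have "(\<integral>t. Gd s t \<partial>\<mu>) * sqrt (2 * s) \<le> 1 / L n * sqrt (2 * (real n + 1))"
      using F_upper[OF s, folded n_def] n F0 L_nonneg[of n] by (intro mult_mono) auto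
    also have "\<dots> = sqrt (2 * (real n + 1)) / L n" by simp
    finally show "deriv (fmu \<mu>) s * sqrt (2 * s) \<le> sqrt (2 * (real (nat \<lfloor>s\<rfloor>) + 1)) / L (nat \<lfloor>s\<rfloor>)"
      by (simp add: n_def d)
  qed
qed

end

theorem lemma3p3:
  fixes \<mu> :: "real measure"
  assumes "prob_space \<mu>"
    and "sets \<mu> = sets borel"
    and "emeasure \<mu> {0..1} = 1"
    and "\<forall>n. (\<integral>t. t ^ n \<partial>\<mu>) = mseq n"
  shows "(\<forall>n. sqrt (real n) \<le> lam n \<and> lam n \<le> sqrt (2 * real n))
    \<and> incseq lam
    \<and> filterlim lam at_top sequentially
    \<and> (\<forall>n\<ge>1. lam (n + 2) / lam (n + 1) \<le> lam (n + 1) / lam n)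
    \<and> (\<lambda>n. lam (Suc n) / lam n) \<longlonglongrightarrow> 1
    \<and> (\<lambda>n. (lam (Suc n))\<^sup>2 - (lam n)\<^sup>2) \<longlonglongrightarrow> 2
    \<and> (\<lambda>n. (lam n)\<^sup>2 / real n) \<longlonglongrightarrow> 2
    \<and> (\<lambda>n. ((lam n)\<^sup>2 - 2 * real n) / ln (real n)) \<longlonglongrightarrow> - 1 / 2
    \<and> ((\<lambda>s. fmu \<mu> s / sqrt (2 * s)) \<longlongrightarrow> 1) at_top
    \<and> (\<forall>s>0. fmu \<mu> differentiable (at s))
    \<and> ((\<lambda>s. deriv (fmu \<mu>) s * sqrt (2 * s)) \<longlongrightarrow> 1) at_top"
proof -
  interpret MU \<mu> by (rule MU.intro) (use assms in auto)
  have diff: "\<forall>s>0. fmu \<mu> differentiable (at s)"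
    using fmu_deriv by (auto simp: real_differentiable_def)
  show ?thesis unfolding lam_eq
    using L_sqrt_bounds L_incseq L_at_top L_ratio_dec L_ratio_lim L_diff_sq_lim L_sq_lim L_log_lim
      f_lim diff deriv_lim by blast
qed


end
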